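(* Let $\nu\ge3$ be a square-free integer with $\nu\equiv2$ or $3\pmod 4$, and for $n\ge1$ let $P_n(t)=(t^2-\nu)^{\circ n}\in\mathbb{Z}[t]$ (the $n$-fold composition of $t^2-\nu$). Write $C_n$ for the constant term of $P_n$ and $D_n$ for the coefficient of $t^2$ in $P_n$. For an integer $k$, let $s(k)$ be the set of primes dividing $k$. Then for every $n\ge2$, $\bigcup_{1\le k\le n} s(C_k)= s(D_{n+1})$. *)

theory Defs
  imports "HOL-Computational_Algebra.Polynomial" "HOL-Computational_Algebra.Squarefree"
          "HOL-Computational_Algebra.Primes"
begin

primrec iterP :: "int \<Rightarrow> nat \<Rightarrow> int poly" where
  "iterP nu 0 = [:0, 1:]"
| "iterP nu (Suc n) = pcompose [:-nu, 0, 1:] (iterP nu n)"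

definition constC :: "int \<Rightarrow> nat \<Rightarrow> int" where
  "constC nu n = coeff (iterP nu n) 0"

definition quadD :: "int \<Rightarrow> nat \<Rightarrow> int" where
  "quadD nu n = coeff (iterP nu n) 2"

definition primeset :: "int \<Rightarrow> int set" where
  "primeset k = {p. prime p \<and> p dvd k}"

end

theory Submission
  imports Defs
begin

lemma iterP_Suc': "iterP nu (Suc n) = iterP nu n * iterP nu n - [:nu:]"
  by (simp add: pcompose_pCons algebra_simps)

declare iterP.simps(2)[simp del]

lemma coeff_sq0: "coeff (p * p) 0 = coeff p 0 * coeff (p::int poly) 0"
  by (simp add: coeff_mult)

lemma coeff_sq1: "coeff (p * p) (Suc 0) = 2 * coeff p 0 * coeff (p::int poly) (Suc 0)"
  by (simp add: coeff_mult numeral_2_eq_2 atMost_Suc)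

lemma coeff_sq2: "coeff (p * p) 2 = 2 * coeff p 0 * coeff (p::int poly) 2 + coeff p 1 ^ 2"
  by (simp add: coeff_mult numeral_2_eq_2 atMost_Suc power2_eq_square algebra_simps)

lemma c_Suc: "coeff (iterP nu (Suc n)) 0 = coeff (iterP nu n) 0 ^ 2 - nu"
  by (simp add: iterP_Suc' coeff_sq0 power2_eq_square)

lemma b_Suc: "coeff (iterP nu (Suc n)) (Suc 0) = 2 * coeff (iterP nu n) 0 * coeff (iterP nu n) (Suc 0)"
  by (simp add: iterP_Suc' coeff_sq1)

lemma d_Suc: "coeff (iterP nu (Suc n)) 2 = 2 * coeff (iterP nu n) 0 * coeff (iterP nu n) 2 + coeff (iterP nu n) 1 ^ 2"
proof -
  have "coeff [:nu:] 2 = 0" by (simp add: numeral_2_eq_2)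
  then show ?thesis by (simp add: iterP_Suc' coeff_sq2)
qed

lemma b_zero: "coeff (iterP nu (Suc n)) (Suc 0) = 0"
  proof (induction n)
  case 0
  show ?case using b_Suc[of nu 0] by simp
next
  case (Suc n)
  then show ?case using b_Suc[of nu "Suc n"] by simp
qed

lemma d_formula: "quadD nu (Suc n) = 2 ^ n * (\<Prod>k\<in>{1..n}. constC nu k)"
proof (induction n)
  case 0
  then show ?case using d_Suc[of nu 0] by (simp add: quadD_def)
next
  case (Suc n)
  have "quadD nu (Suc (Suc n)) = 2 * constC nu (Suc n) * quadD nu (Suc n)"
    by (simp add: quadD_def constC_def d_Suc[of nu "Suc n"] b_zero)
  also have "\<dots> = 2 ^ Suc n * (\<Prod>k\<in>{1..Suc n}. constC nu k)"
    using Suc by (simp add: prod.cl_ivl_Suc mult_ac)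
  finally show ?case .
qed

theorem lemma4p5:
  fixes nu :: int and n :: nat
  assumes "nu \<ge> 3" and "squarefree nu" and "nu mod 4 = 2 \<or> nu mod 4 = 3"
    and "n \<ge> 2"
  shows "(\<Union>k\<in>{1..n}. primeset (constC nu k)) = primeset (quadD nu (Suc n))"
proof -
  have c1: "constC nu 1 = - nu"
    by (simp add: constC_def c_Suc[of nu 0, simplified])
  have c2: "constC nu 2 = nu * nu - nu"
    using c_Suc[of nu 1] c1 by (simp add: constC_def numeral_2_eq_2 power2_eq_square)
  have ev: "2 dvd constC nu 2" unfolding c2 by simp
  have 2: "2 \<in> {1..n}" using assms(4) by simp
  show ?thesis
  proof (rule set_eqI)
    fix p :: int
    have "p \<in> primeset (quadD nu (Suc n)) \<longleftrightarrow> prime p \<and> (p dvd 2 \<or> (\<exists>k\<in>{1..n}. p dvd constC nu k))"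
      using assms(4) unfolding primeset_def d_formula
      by (auto simp: prime_dvd_mult_iff prime_dvd_power_iff prime_dvd_prod_iff)
    also have "\<dots> \<longleftrightarrow> prime p \<and> (\<exists>k\<in>{1..n}. p dvd constC nu k)"
      using ev 2 by (meson dvd_trans)
    finally show "p \<in> (\<Union>k\<in>{1..n}. primeset (constC nu k)) \<longleftrightarrow> p \<in> primeset (quadD nu (Suc n))"
      unfolding primeset_def by auto
  qed
qed

end
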